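(* There exists a constant $C>0$ such that for all $t,s\in(0,1)$ and all integers $j_1\le j_2$ with $j_2\ge0$, both quantities \[\sum_{k_1\in\mathbb{Z}}\sum_{k_2\in\mathbb{Z}^<_{j_2}(t,s)}L_{j_1,j_2}^{k_1,k_2}\big|I_{j_1,j_2}^{k_1,k_2}[t,s]\big|\quad\text{and}\quad\sum_{k_1\in\mathbb{Z}}\sum_{k_2\in\mathbb{Z}^>_{j_2}(t,s)}L_{j_1,j_2}^{k_1,k_2}\big|I_{j_1,j_2}^{k_1,k_2}[t,s]\big|\] are bounded above by $C\sqrt{\log(3+|j_1|+2^{j_1})}\sqrt{\log(3+|j_2|+2^{j_2})}\,2^{-j_2}$.
   Context: Fix $H_1,H_2\in(\tfrac12,1)$ with $H_1+H_2>\tfrac32$. Let $\psi$ be the Meyer wavelet (Schwartz, $\widehat\psi$ compactly supported away from $0$, generating an orthonormal wavelet basis of $L^2(\mathbb{R})$). For $H\in(\tfrac12,1)$, $\psi_H$ is defined by $\widehat{\psi_H}(0)=0$, $\widehat{\psi_H}(\xi)=(i\xi)^{-(H-\frac12)}\widehat\psi(\xi)$ ($\xi\neq0$); equivalently $\psi_H(t)=\frac{1}{\Gamma(H-\frac12)}\int_{\mathbb{R}}(t-x)_+^{H-\frac32}\psi(x)dx$. Set $I_{j_1,j_2}^{k_1,k_2}[t,s]=\int_{[t,s]}\psi_{H_1}(2^{j_1}x-k_1)\psi_{H_2}(2^{j_2}x-k_2)dx$ (integral over the interval between $t$ and $s$, taken in absolute orientation), $L_{j_1,j_2}^{k_1,k_2}=\sqrt{\log(3+|j_1|+|k_1|)}\sqrt{\log(3+|j_2|+|k_2|)}$,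 $\mathbb{Z}^<_{j}(t,s)=\{k\in\mathbb{Z}:k2^{-j}<\min\{t,s\}\}$, $\mathbb{Z}^>_{j}(t,s)=\{k\in\mathbb{Z}:k2^{-j}>\max\{t,s\}\}$. *)

theory Defs
  imports "HOL-Analysis.Analysis"
begin

definition fourier :: "(real \<Rightarrow> real) \<Rightarrow> real \<Rightarrow> complex" where
  "fourier f \<xi> = integral\<^sup>L lborel (\<lambda>x. complex_of_real (f x) * cis (- \<xi> * x))"

definition schwartz :: "(real \<Rightarrow> real) \<Rightarrow> bool" where
  "schwartz f \<longleftrightarrow>
     (\<forall>n x. (deriv ^^ n) f differentiable (at x)) \<and>
     (\<forall>n m. \<exists>B. \<forall>x. \<bar>x\<bar> ^ m * \<bar>(deriv ^^ n) f x\<bar> \<le> B)"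

definition wav :: "(real \<Rightarrow> real) \<Rightarrow> int \<Rightarrow> int \<Rightarrow> real \<Rightarrow> real" where
  "wav \<psi> j k x = 2 powr (real_of_int j / 2) * \<psi> (2 powr real_of_int j * x - real_of_int k)"

definition orthonormal_wavelet_basis :: "(real \<Rightarrow> real) \<Rightarrow> bool" where
  "orthonormal_wavelet_basis \<psi> \<longleftrightarrow>
     (\<forall>j k. wav \<psi> j k \<in> borel_measurable lborel \<and> integrable lborel (\<lambda>x. (wav \<psi> j k x)\<^sup>2)) \<and>
     (\<forall>j k j' k'. (LINT x|lborel. wav \<psi> j k x * wav \<psi> j' k' x)
                    = (if (j, k) = (j', k') then 1 else 0)) \<and>
     (\<forall>f. f \<in> borel_measurable lborel \<longrightarrow> integrable lborel (\<lambda>x. (f x)\<^sup>2) \<longrightarrow>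
          (\<forall>j k. (LINT x|lborel. f x * wav \<psi> j k x) = 0) \<longrightarrow> (AE x in lborel. f x = 0))"

definition meyer_wavelet :: "(real \<Rightarrow> real) \<Rightarrow> bool" where
  "meyer_wavelet \<psi> \<longleftrightarrow> schwartz \<psi> \<and> orthonormal_wavelet_basis \<psi> \<and>
     (\<forall>\<xi>. (\<bar>\<xi>\<bar> < 2 * pi / 3 \<or> \<bar>\<xi>\<bar> > 8 * pi / 3) \<longrightarrow> fourier \<psi> \<xi> = 0)"

definition psiH :: "(real \<Rightarrow> real) \<Rightarrow> real \<Rightarrow> real \<Rightarrow> real" where
  "psiH \<psi> H t = (1 / Gamma (H - 1/2)) *
     (LINT x|lborel. (if x < t then (t - x) powr (H - 3/2) else 0) * \<psi> x)"

definition Iint :: "(real \<Rightarrow> real) \<Rightarrow> real \<Rightarrow> real \<Rightarrow> int \<Rightarrow> int \<Rightarrow> int \<Rightarrow> int \<Rightarrow> real \<Rightarrow> real \<Rightarrow> real" where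
  "Iint \<psi> H1 H2 j1 j2 k1 k2 t s =
     (LINT x:{min t s..max t s}|lborel.
        psiH \<psi> H1 (2 powr real_of_int j1 * x - real_of_int k1) *
        psiH \<psi> H2 (2 powr real_of_int j2 * x - real_of_int k2))"

definition Lw :: "int \<Rightarrow> int \<Rightarrow> int \<Rightarrow> int \<Rightarrow> real" where
  "Lw j1 j2 k1 k2 = sqrt (ln (3 + real_of_int \<bar>j1\<bar> + real_of_int \<bar>k1\<bar>)) *
                    sqrt (ln (3 + real_of_int \<bar>j2\<bar> + real_of_int \<bar>k2\<bar>))"

definition Zlt :: "int \<Rightarrow> real \<Rightarrow> real \<Rightarrow> int set" where
  "Zlt j t s = {k. real_of_int k * 2 powr (- real_of_int j) < min t s}"

definition Zgt :: "int \<Rightarrow> real \<Rightarrow> real \<Rightarrow> int set" where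
  "Zgt j t s = {k. real_of_int k * 2 powr (- real_of_int j) > max t s}"

end

theory Submission
  imports Defs "HOL-Probability.Sinc_Integral" "HOL-Probability.Characteristic_Functions"
begin

lemma schwartz_cont:
  assumes "schwartz \<psi>" shows "continuous_on UNIV \<psi>"
proof -
  have "\<psi> differentiable (at x)" for x
    using assms unfolding schwartz_def by (metis funpow_0)
  then show ?thesis
    by (meson continuous_at_imp_continuous_on differentiable_imp_continuous_within)
qed

lemma schwartz_meas:
  assumes "schwartz \<psi>" shows "\<psi> \<in> borel_measurable lborel"
  using borel_measurable_continuous_onI[OF schwartz_cont[OF assms]] by simp

lemma pow_one_plus_le: "(1 + \<bar>x::real\<bar>) ^ m \<le> 2 ^ m * (1 + \<bar>x\<bar> ^ m)"
proof (cases "\<bar>x\<bar> \<le> 1")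
  case True
  then have "(1 + \<bar>x\<bar>) ^ m \<le> 2 ^ m" by (intro power_mono) auto
  moreover have "(2::real) ^ m \<le> 2 ^ m * (1 + \<bar>x\<bar> ^ m)" by simp
  ultimately show ?thesis by linarith
next
  case False
  then have "(1 + \<bar>x\<bar>) ^ m \<le> (2 * \<bar>x\<bar>) ^ m" by (intro power_mono) auto
  moreover have "(2 * \<bar>x\<bar>) ^ m \<le> 2 ^ m * (1 + \<bar>x\<bar> ^ m)" by (simp add: power_mult_distrib)
  ultimately show ?thesis by linarith
qed

lemma schwartz_decay:
  assumes "schwartz \<psi>"
  shows "\<exists>C. \<forall>x. (1 + \<bar>x\<bar>) ^ n * \<bar>\<psi> x\<bar> \<le> C * inverse (1 + x^2)"
proof -
  from assms obtain B0 where B0: "\<And>x. \<bar>x\<bar> ^ 0 * \<bar>(deriv ^^ 0) \<psi> x\<bar> \<le> B0"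
    unfolding schwartz_def by metis
  from assms obtain Bm where Bm: "\<And>x. \<bar>x\<bar> ^ (n+2) * \<bar>(deriv ^^ 0) \<psi> x\<bar> \<le> Bm"
    unfolding schwartz_def by metis
  show ?thesis
  proof (intro exI allI)
    fix x :: real
    have b0: "\<bar>\<psi> x\<bar> \<le> B0" using B0[of x] by simp
    have bm: "\<bar>x\<bar> ^ (n+2) * \<bar>\<psi> x\<bar> \<le> Bm" using Bm[of x] by simp
    have "(1 + \<bar>x\<bar>) ^ (n+2) * \<bar>\<psi> x\<bar> \<le> 2 ^ (n+2) * (1 + \<bar>x\<bar> ^ (n+2)) * \<bar>\<psi> x\<bar>"
      by (intro mult_right_mono pow_one_plus_le) auto
    also have "\<dots> = 2 ^ (n+2) * (\<bar>\<psi> x\<bar> + \<bar>x\<bar> ^ (n+2) * \<bar>\<psi> x\<bar>)"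
      by (simp add: algebra_simps)
    also have "\<dots> \<le> 2 ^ (n+2) * (B0 + Bm)"
      using b0 bm by (intro mult_left_mono) auto
    finally have 1: "(1 + \<bar>x\<bar>) ^ (n+2) * \<bar>\<psi> x\<bar> \<le> 2 ^ (n+2) * (B0 + Bm)" .
    have 2: "1 + x^2 \<le> (1 + \<bar>x\<bar>)^2"
      by (simp add: power2_eq_square algebra_simps)
    have "(1 + \<bar>x\<bar>) ^ n * \<bar>\<psi> x\<bar> * (1 + x^2) \<le> (1 + \<bar>x\<bar>) ^ n * \<bar>\<psi> x\<bar> * (1 + \<bar>x\<bar>)^2"
      by (intro mult_left_mono 2) simp
    also have "\<dots> = (1 + \<bar>x\<bar>) ^ (n+2) * \<bar>\<psi> x\<bar>"
      by (simp add: power_add power2_eq_square)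
    finally have 3: "(1 + \<bar>x\<bar>) ^ n * \<bar>\<psi> x\<bar> * (1 + x^2) \<le> 2 ^ (n+2) * (B0 + Bm)"
      using 1 by linarith
    have p: "1 + x^2 > 0" by (simp add: add_pos_nonneg)
    show "(1 + \<bar>x\<bar>) ^ n * \<bar>\<psi> x\<bar> \<le> 2 ^ (n+2) * (B0 + Bm) * inverse (1 + x^2)"
      using 3 p by (simp add: field_simps)
  qed
qed

lemma inv_sq_integrable: "integrable lborel (\<lambda>x::real. inverse (1 + x^2))"
proof -
  have "set_integrable lborel (einterval (-\<infinity>) \<infinity>) (\<lambda>x::real. inverse (1 + x^2))"
    using integrable_inverse_1_plus_square by blast
  then show ?thesis by (simp add: set_integrable_def)
qed

locale mw =
  fixes \<psi> :: "real \<Rightarrow> real"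
  assumes mw: "meyer_wavelet \<psi>"
begin

lemma sw: "schwartz \<psi>" using mw unfolding meyer_wavelet_def by auto

lemma cont: "continuous_on UNIV \<psi>" by (rule schwartz_cont[OF sw])

lemma meas[measurable]: "\<psi> \<in> borel_measurable lborel" by (rule schwartz_meas[OF sw])

lemma mom_int: "integrable lborel (\<lambda>x. (1 + \<bar>x\<bar>) ^ n * \<bar>\<psi> x\<bar>)"
proof -
  obtain C where C: "\<And>x. (1 + \<bar>x\<bar>) ^ n * \<bar>\<psi> x\<bar> \<le> C * inverse (1 + x^2)"
    using schwartz_decay[OF sw, of n] by blast
  have ic: "integrable lborel (\<lambda>x. C * inverse (1 + x^2))" using inv_sq_integrable by simp
  show ?thesis
  proof (rule Bochner_Integration.integrable_bound[OF ic])
    show "(\<lambda>x. (1 + \<bar>x\<bar>) ^ n * \<bar>\<psi> x\<bar>) \<in> borel_measurable lborel" by measurable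
    show "AE x in lborel. norm ((1 + \<bar>x\<bar>) ^ n * \<bar>\<psi> x\<bar>) \<le> norm (C * inverse (1 + x\<^sup>2))"
    proof (rule AE_I2)
      fix x :: real
      have "0 \<le> (1 + \<bar>x\<bar>) ^ n * \<bar>\<psi> x\<bar>" by simp
      then show "norm ((1 + \<bar>x\<bar>) ^ n * \<bar>\<psi> x\<bar>) \<le> norm (C * inverse (1 + x\<^sup>2))"
        using C[of x] by simp
    qed
  qed
qed

lemma sup_bound: "\<exists>S. \<forall>x. (1 + \<bar>x\<bar>) ^ n * \<bar>\<psi> x\<bar> \<le> S"
proof -
  obtain C where C: "\<And>x. (1 + \<bar>x\<bar>) ^ n * \<bar>\<psi> x\<bar> \<le> C * inverse (1 + x^2)"
    using schwartz_decay[OF sw, of n] by blast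
  have "C * inverse (1 + x^2) \<le> \<bar>C\<bar>" for x :: real
  proof -
    have "inverse (1 + x^2) \<le> 1" "0 \<le> inverse (1 + x^2)"
      by (simp_all add: add_pos_nonneg inverse_le_1_iff)
    then have "\<bar>C\<bar> * inverse (1 + x^2) \<le> \<bar>C\<bar> * 1" by (intro mult_left_mono) auto
    moreover have "C * inverse (1 + x^2) \<le> \<bar>C\<bar> * inverse (1 + x^2)"
      using \<open>0 \<le> inverse (1 + x^2)\<close> by (intro mult_right_mono) auto
    ultimately show ?thesis by simp
  qed
  then show ?thesis using C by (meson order_trans)
qed

lemma int_bound:
  assumes "g \<in> borel_measurable lborel" "\<And>x. \<bar>g x\<bar> \<le> c * ((1 + \<bar>x\<bar>) ^ n * \<bar>\<psi> x\<bar>)"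
  shows "integrable lborel g"
proof -
  have "integrable lborel (\<lambda>x. c * ((1 + \<bar>x\<bar>) ^ n * \<bar>\<psi> x\<bar>))" using mom_int by simp
  then show ?thesis
  proof (rule Bochner_Integration.integrable_bound[OF _ assms(1)])
    show "AE x in lborel. norm (g x) \<le> norm (c * ((1 + \<bar>x\<bar>) ^ n * \<bar>\<psi> x\<bar>))"
    proof (rule AE_I2)
      fix x
      have "c * ((1 + \<bar>x\<bar>) ^ n * \<bar>\<psi> x\<bar>) \<le> \<bar>c * ((1 + \<bar>x\<bar>) ^ n * \<bar>\<psi> x\<bar>)\<bar>" by simp
      then show "norm (g x) \<le> norm (c * ((1 + \<bar>x\<bar>) ^ n * \<bar>\<psi> x\<bar>))"
        using assms(2)[of x] by simp
    qed
  qed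
qed

lemma int_psi: "integrable lborel \<psi>"
  by (rule int_bound[of _ 1 0]) auto

lemma int_xpsi: "integrable lborel (\<lambda>x. x * \<psi> x)"
  by (rule int_bound[of _ 1 1]) (auto simp: abs_mult intro!: mult_right_mono)

lemma int_x2psi: "integrable lborel (\<lambda>x. x^2 * \<bar>\<psi> x\<bar>)"
proof (rule int_bound[of _ 1 2])
  fix x :: real
  have "x^2 \<le> (1 + \<bar>x\<bar>)^2" by (simp add: power2_eq_square algebra_simps)
  then show "\<bar>x\<^sup>2 * \<bar>\<psi> x\<bar>\<bar> \<le> 1 * ((1 + \<bar>x\<bar>) ^ 2 * \<bar>\<psi> x\<bar>)"
    by (simp add: abs_mult mult_right_mono)
qed simp

lemma fourier_vanish: "\<bar>\<xi>\<bar> < 2 * pi / 3 \<Longrightarrow> fourier \<psi> \<xi> = 0"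
  using mw unfolding meyer_wavelet_def by auto

lemma int_four: "integrable lborel (\<lambda>x. complex_of_real (\<psi> x) * cis (- \<xi> * x))"
proof (rule Bochner_Integration.integrable_bound[OF int_psi])
  show "(\<lambda>x. complex_of_real (\<psi> x) * cis (- \<xi> * x)) \<in> borel_measurable lborel"
    using borel_measurable_continuous_onI[of "\<lambda>x. cis (- \<xi> * x)"]
    by (auto simp: cis_conv_exp intro!: continuous_intros)
  show "AE x in lborel. norm (complex_of_real (\<psi> x) * cis (- \<xi> * x)) \<le> norm (\<psi> x)"
    by (auto simp: norm_mult)
qed

lemma four_Re: "(LINT x|lborel. \<psi> x * cos (\<xi> * x)) = Re (fourier \<psi> \<xi>)"
proof -
  have "Re (fourier \<psi> \<xi>) = (LINT x|lborel. Re (complex_of_real (\<psi> x) * cis (- \<xi> * x)))"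
    unfolding fourier_def by (rule integral_bounded_linear[OF bounded_linear_Re int_four, symmetric])
  then show ?thesis by simp
qed

lemma four_Im: "(LINT x|lborel. \<psi> x * sin (\<xi> * x)) = - Im (fourier \<psi> \<xi>)"
proof -
  have "Im (fourier \<psi> \<xi>) = (LINT x|lborel. Im (complex_of_real (\<psi> x) * cis (- \<xi> * x)))"
    unfolding fourier_def by (rule integral_bounded_linear[OF bounded_linear_Im int_four, symmetric])
  then show ?thesis by simp
qed

lemma psi_int0: "(LINT x|lborel. \<psi> x) = 0"
  using four_Re[of 0] fourier_vanish[of 0] by simp

lemma sin_approx: "\<bar>sin u - u\<bar> \<le> (u::real)^2 / 2"
proof -
  have "cmod (iexp u - (\<Sum>k \<le> 1. (\<i> * u)^k / fact k)) \<le> \<bar>u\<bar>^(Suc 1) / fact (Suc 1)"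
    by (rule iexp_approx1)
  moreover have "\<bar>Im (iexp u - (\<Sum>k \<le> 1. (\<i> * u)^k / fact k))\<bar> \<le> cmod (iexp u - (\<Sum>k \<le> 1. (\<i> * u)^k / fact k))"
    by (rule abs_Im_le_cmod)
  moreover have "Im (iexp u - (\<Sum>k \<le> 1. (\<i> * u)^k / fact k)) = sin u - u"
    by (simp add: Im_exp)
  ultimately show ?thesis by (simp add: power2_eq_square)
qed

lemma psi_int1: "(LINT x|lborel. x * \<psi> x) = 0"
proof (rule ccontr)
  define c where "c = (LINT x|lborel. x * \<psi> x)"
  define M where "M = (LINT x|lborel. x^2 * \<bar>\<psi> x\<bar>)"
  assume "(LINT x|lborel. x * \<psi> x) \<noteq> 0"
  then have c0: "c \<noteq> 0" by (simp add: c_def)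
  have M0: "M \<ge> 0" unfolding M_def by (intro integral_nonneg_AE) auto
  define \<xi> where "\<xi> = min 1 (\<bar>c\<bar> / (M + 1))"
  have xi0: "\<xi> > 0" using c0 M0 by (simp add: \<xi>_def)
  have "\<xi> \<le> 1" by (simp add: \<xi>_def)
  then have xi1: "\<xi> < 2 * pi / 3" using pi_gt3 by linarith
  have s0: "(LINT x|lborel. \<psi> x * sin (\<xi> * x)) = 0"
    using four_Im[of \<xi>] fourier_vanish[of \<xi>] xi0 xi1 by simp
  have int_s: "integrable lborel (\<lambda>x. \<psi> x * sin (\<xi> * x))"
    by (rule int_bound[of _ 1 0]) (auto simp: abs_mult intro!: mult_left_le)
  have "(LINT x|lborel. \<psi> x * (\<xi> * x - sin (\<xi> * x))) = (LINT x|lborel. \<xi> * (x * \<psi> x) - \<psi> x * sin (\<xi> * x))"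
    by (simp add: algebra_simps)
  also have "\<dots> = (LINT x|lborel. \<xi> * (x * \<psi> x)) - (LINT x|lborel. \<psi> x * sin (\<xi> * x))"
    by (rule Bochner_Integration.integral_diff[OF integrable_mult_right[OF int_xpsi] int_s])
  also have "\<dots> = \<xi> * c" using s0 by (simp add: c_def)
  finally have eq: "\<xi> * c = (LINT x|lborel. \<psi> x * (\<xi> * x - sin (\<xi> * x)))" by simp
  have "\<bar>\<xi> * c\<bar> \<le> (LINT x|lborel. norm (\<psi> x * (\<xi> * x - sin (\<xi> * x))))"
    unfolding eq using integral_norm_bound[of lborel "\<lambda>x. \<psi> x * (\<xi> * x - sin (\<xi> * x))"] by simp
  also have "\<dots> \<le> (LINT x|lborel. \<xi>^2 / 2 * (x^2 * \<bar>\<psi> x\<bar>))"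
  proof (rule integral_mono')
    show "integrable lborel (\<lambda>x. \<xi>^2 / 2 * (x^2 * \<bar>\<psi> x\<bar>))"
      using int_x2psi by simp
    fix x :: real
    have "\<bar>\<xi> * x - sin (\<xi> * x)\<bar> \<le> (\<xi> * x)^2 / 2"
      using sin_approx[of "\<xi> * x"] by linarith
    then have le: "\<bar>\<psi> x\<bar> * \<bar>\<xi> * x - sin (\<xi> * x)\<bar> \<le> \<bar>\<psi> x\<bar> * ((\<xi> * x)^2 / 2)"
      by (rule mult_left_mono) simp
    have "norm (\<psi> x * (\<xi> * x - sin (\<xi> * x))) = \<bar>\<psi> x\<bar> * \<bar>\<xi> * x - sin (\<xi> * x)\<bar>"
      by (simp add: abs_mult)
    also have "\<dots> \<le> \<bar>\<psi> x\<bar> * ((\<xi> * x)^2 / 2)" by (rule le)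
    also have "\<dots> = \<xi>^2 / 2 * (x^2 * \<bar>\<psi> x\<bar>)"
      by (simp add: power_mult_distrib field_simps)
    finally show "norm (\<psi> x * (\<xi> * x - sin (\<xi> * x))) \<le> \<xi>^2 / 2 * (x^2 * \<bar>\<psi> x\<bar>)" .
  qed simp
  also have "\<dots> = \<xi>^2 / 2 * M" by (simp add: M_def)
  finally have "\<xi> * \<bar>c\<bar> \<le> \<xi> * (\<xi> * M / 2)"
    using xi0 by (simp add: abs_mult power2_eq_square field_simps)
  then have 1: "\<bar>c\<bar> \<le> \<xi> * M / 2" using xi0 by (meson mult_le_cancel_left_pos)
  have "\<xi> \<le> \<bar>c\<bar> / (M + 1)" by (simp add: \<xi>_def)
  then have "\<xi> * M / 2 \<le> (\<bar>c\<bar> / (M + 1)) * M / 2"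
    using M0 by (intro divide_right_mono mult_right_mono) auto
  also have "(\<bar>c\<bar> / (M + 1)) * M / 2 < \<bar>c\<bar>"
  proof -
    have "0 \<le> \<bar>c\<bar> * M" using M0 by simp
    moreover have "0 < \<bar>c\<bar>" using c0 by simp
    ultimately have "\<bar>c\<bar> * M < \<bar>c\<bar> * (M + 1) * 2" by (simp add: algebra_simps)
    then show ?thesis using M0 by (simp add: field_simps)
  qed
  finally show False using 1 by simp
qed

end


lemma taylor_pow:
  fixes a y :: real
  assumes a: "-1 < a" "a < 0" and y: "y \<le> 1/2"
  shows "\<bar>(1 - y) powr a - 1 + a * y\<bar> \<le> 8 * y^2"
proof (cases "y \<le> -1")
  case True
  have "(1 - y) powr a \<le> (1 - y) powr 0" using True a by (intro powr_mono) auto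
  then have p1: "(1 - y) powr a \<le> 1" using True by simp
  have p0: "0 \<le> (1 - y) powr a" by simp
  have "\<bar>(1 - y) powr a - 1 + a * y\<bar> \<le> 2 + \<bar>y\<bar>"
  proof -
    have ay0: "0 \<le> a * y" using a True by (intro mult_nonpos_nonpos) auto
    have "(a + 1) * y \<le> 0" using a True by (intro mult_nonneg_nonpos) auto
    then have ay1: "a * y \<le> - y" by (simp add: algebra_simps)
    show ?thesis unfolding abs_le_iff using p0 p1 ay0 ay1 True by linarith
  qed
  also have "\<dots> \<le> 3 * y^2"
  proof -
    have y1: "1 \<le> \<bar>y\<bar>" using True by simp
    then have "\<bar>y\<bar> * 1 \<le> \<bar>y\<bar> * \<bar>y\<bar>" by (intro mult_left_mono) auto
    then have "\<bar>y\<bar> \<le> y^2" by (simp add: power2_eq_square)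
    then show ?thesis using y1 by linarith
  qed
  finally show ?thesis by simp
next
  case False
  show ?thesis
  proof (cases "y = 0")
    case True then show ?thesis by simp
  next
    case y0: False
    define cf :: "nat \<Rightarrow> real" where "cf m = (if m = 0 then 1 else if m = 1 then -a else a * (a - 1))" for m
    define diff where "diff m t = cf m * (1 - t) powr (a - real m)" for m t
    have d0: "diff 0 = (\<lambda>t. (1 - t) powr a)" by (auto simp: diff_def cf_def)
    have D: "\<forall>m t. m < 2 \<and> -1 \<le> t \<and> t \<le> 1/2 \<longrightarrow> DERIV (diff m) t :> diff (Suc m) t"
    proof (intro allI impI)
      fix m :: nat and t :: real
      assume h: "m < 2 \<and> -1 \<le> t \<and> t \<le> 1/2"
      have g: "DERIV (\<lambda>t. 1 - t) t :> -1" by (auto intro!: derivative_eq_intros)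
      have "DERIV (\<lambda>t. (1 - t) powr (a - real m)) t :> (a - real m) * (1 - t) powr (a - real m - of_nat 1) * -1"
        by (rule DERIV_fun_powr[OF g]) (use h in auto)
      then have "DERIV (\<lambda>t. cf m * (1 - t) powr (a - real m)) t :> cf m * ((a - real m) * (1 - t) powr (a - real m - of_nat 1) * -1)"
        by (rule DERIV_cmult)
      moreover have "cf m * ((a - real m) * (1 - t) powr (a - real m - of_nat 1) * -1) = diff (Suc m) t"
        using h by (auto simp: diff_def cf_def less_2_cases_iff algebra_simps)
      ultimately show "DERIV (diff m) t :> diff (Suc m) t" unfolding diff_def by simp
    qed
    obtain t where t: "(if y < 0 then y < t \<and> t < 0 else 0 < t \<and> t < y)"
      and eq: "(1 - y) powr a = (\<Sum>m<2. (diff m 0 / fact m) * (y - 0)^m) + (diff 2 t / fact 2) * (y - 0)^2"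
      using Taylor[of 2 diff "\<lambda>t. (1 - t) powr a" "-1" "1/2" 0 y, OF _ d0 D] False y y0 by auto
    have tr: "-1 \<le> t" "t \<le> 1/2" using t False y by (auto split: if_splits)
    have s: "(\<Sum>m<2. (diff m 0 / fact m) * (y - 0)^m) = 1 - a * y"
      by (simp add: diff_def cf_def numeral_2_eq_2)
    have "\<bar>diff 2 t\<bar> \<le> 16"
    proof -
      have "(1 - t) powr (a - 2) \<le> (1/2) powr (a - 2)"
        using tr a by (intro powr_mono2') auto
      also have "(1/2::real) powr (a - 2) = 2 powr (2 - a)"
        by (simp add: powr_divide powr_minus_divide[symmetric] powr_minus)
      also have "\<dots> \<le> 2 powr 3" using a by (intro powr_mono) auto
      finally have p: "(1 - t) powr (a - 2) \<le> 8" by simp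
      have aa: "\<bar>a\<bar> * \<bar>a\<bar> \<le> 1 * 1" using a by (intro mult_mono) auto
      have "\<bar>a * (a - 1)\<bar> = \<bar>a\<bar> * \<bar>a\<bar> + \<bar>a\<bar>" using a by (simp add: abs_if algebra_simps)
      then have "\<bar>a * (a - 1)\<bar> \<le> 2" using aa a by simp
      then have "\<bar>a * (a - 1)\<bar> * (1 - t) powr (a - 2) \<le> 2 * 8"
        using p by (intro mult_mono) auto
      then show ?thesis by (simp add: diff_def cf_def abs_mult)
    qed
    have "\<bar>(1 - y) powr a - 1 + a * y\<bar> = \<bar>diff 2 t\<bar> / 2 * y^2"
      using eq s by (simp add: abs_mult)
    also have "\<dots> \<le> 16 / 2 * y^2"
      using \<open>\<bar>diff 2 t\<bar> \<le> 16\<close> by (intro mult_right_mono divide_right_mono) auto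
    finally show ?thesis by simp
  qed
qed


definition Pk :: "real \<Rightarrow> real \<Rightarrow> real" where
  "Pk a u = indicator {0<..<1} u * u powr a"

lemma Pk_nonneg: "0 \<le> Pk a u" by (simp add: Pk_def)

lemma Pk_meas[measurable]: "Pk a \<in> borel_measurable lborel"
  unfolding Pk_def by measurable

lemma Pk_int: assumes "-1 < a" shows "integrable lborel (Pk a)"
proof -
  have "(\<lambda>x. x powr a) integrable_on {0<..1}" by (rule integrable_on_powr_from_0') (use assms in auto)
  then have "(\<lambda>x. x powr a) absolutely_integrable_on {0<..1}"
    by (rule nonnegative_absolutely_integrable_1) auto
  then have "set_integrable lebesgue {0<..<1} (\<lambda>x::real. x powr a)"
    by (rule set_integrable_subset) auto
  then have "integrable lebesgue (Pk a)" unfolding set_integrable_def Pk_def by simp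
  then show ?thesis by (subst (asm) integrable_completion) auto
qed

lemma Pk_shift_int: assumes "-1 < a" shows "integrable lborel (\<lambda>x. Pk a (t - x))"
  using lborel_integrable_real_affine_iff[of "-1" "Pk a" t] Pk_int[OF assms] by simp

lemma Pk_shift_eq: "(LINT x|lborel. Pk a (t - x)) = (LINT x|lborel. Pk a x)"
  using lborel_integral_real_affine[of "-1" "Pk a" t] by simp

lemma Pk_val: "t - 1 < x \<Longrightarrow> x < t \<Longrightarrow> Pk a (t - x) = (t - x) powr a"
  by (simp add: Pk_def)

lemma absint_le:
  fixes f G :: "real \<Rightarrow> real"
  assumes "\<And>x. \<bar>f x\<bar> \<le> G x" "integrable lborel G"
  shows "\<bar>LINT x|lborel. f x\<bar> \<le> (LINT x|lborel. G x)"
proof -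
  have "\<bar>LINT x|lborel. f x\<bar> \<le> (LINT x|lborel. norm (f x))"
    using integral_norm_bound[of lborel f] by simp
  also have "\<dots> \<le> (LINT x|lborel. G x)"
  proof (rule integral_mono'[OF assms(2)])
    fix x
    show "norm (f x) \<le> G x" using assms(1)[of x] by simp
    show "0 \<le> G x" using assms(1)[of x] abs_ge_zero[of "f x"] by linarith
  qed
  finally show ?thesis .
qed

context mw
begin

definition gf :: "real \<Rightarrow> real \<Rightarrow> real \<Rightarrow> real" where
  "gf a t x = (if x < t then (t - x) powr a else 0) * \<psi> x"

definition Q :: "nat \<Rightarrow> real \<Rightarrow> real" where
  "Q n x = (1 + \<bar>x\<bar>) ^ n * \<bar>\<psi> x\<bar>"

lemma Q_nonneg: "0 \<le> Q n x" by (simp add: Q_def)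

lemma Q_int: "integrable lborel (Q n)" unfolding Q_def by (rule mom_int)

definition S :: "nat \<Rightarrow> real" where
  "S n = (SOME S. \<forall>x. (1 + \<bar>x\<bar>) ^ n * \<bar>\<psi> x\<bar> \<le> S)"

lemma S: "Q n x \<le> S n"
  using someI_ex[OF sup_bound[of n]] unfolding S_def Q_def by blast

lemma S_nonneg: "0 \<le> S n" using S[of n 0] Q_nonneg[of n 0] by linarith

lemma gf_pt:
  assumes "a \<le> 0"
  shows "\<bar>gf a t x\<bar> \<le> Pk a (t - x) * \<bar>\<psi> x\<bar> + \<bar>\<psi> x\<bar>"
proof (cases "x < t")
  case True
  show ?thesis
  proof (cases "t - 1 < x")
    case True2: True
    then show ?thesis using True by (simp add: gf_def Pk_val abs_mult)
  next
    case False
    then have "(t - x) powr a \<le> (t - x) powr 0" using assms by (intro powr_mono) auto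
    then have "(t - x) powr a \<le> 1" using True by simp
    then have "\<bar>gf a t x\<bar> \<le> \<bar>\<psi> x\<bar>" using True
      by (simp add: gf_def abs_mult mult_left_le_one_le)
    then show ?thesis using Pk_nonneg[of a "t - x"] by (simp add: add_increasing)
  qed
qed (simp add: gf_def Pk_nonneg)

definition \<kappa> :: "real \<Rightarrow> real" where "\<kappa> a = (LINT x|lborel. Pk a x)"

lemma kappa_nonneg: "0 \<le> \<kappa> a" unfolding \<kappa>_def by (intro integral_nonneg_AE) (auto simp: Pk_nonneg)

definition MQ :: "nat \<Rightarrow> real" where "MQ n = (LINT x|lborel. Q n x)"

lemma MQ_nonneg: "0 \<le> MQ n" unfolding MQ_def by (intro integral_nonneg_AE) (auto simp: Q_nonneg)

lemma gf_bound0: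
  assumes "-1 < a" "a \<le> 0"
  shows "\<bar>LINT x|lborel. gf a t x\<bar> \<le> S 0 * \<kappa> a + MQ 0"
proof -
  have "\<bar>LINT x|lborel. gf a t x\<bar> \<le> (LINT x|lborel. S 0 * Pk a (t - x) + Q 0 x)"
  proof (rule absint_le)
    show "integrable lborel (\<lambda>x. S 0 * Pk a (t - x) + Q 0 x)"
      using Pk_shift_int[OF assms(1)] Q_int by auto
    fix x
    have "Pk a (t - x) * \<bar>\<psi> x\<bar> \<le> Pk a (t - x) * S 0"
      using S[of 0 x] by (intro mult_left_mono) (auto simp: Q_def Pk_nonneg)
    then show "\<bar>gf a t x\<bar> \<le> S 0 * Pk a (t - x) + Q 0 x"
      using gf_pt[OF assms(2), of t x] by (simp add: Q_def algebra_simps)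
  qed
  also have "\<dots> = S 0 * \<kappa> a + MQ 0"
    using Pk_shift_int[OF assms(1), of t] Q_int[of 0]
    by (simp add: Pk_shift_eq \<kappa>_def MQ_def)
  finally show ?thesis .
qed

lemma gf_neg:
  assumes "-1 < a" "a \<le> 0" "t \<le> -1"
  shows "\<bar>LINT x|lborel. gf a t x\<bar> \<le> inverse ((1 + \<bar>t\<bar>) ^ 3) * (S 3 * \<kappa> a + MQ 3)"
proof -
  have "\<bar>LINT x|lborel. gf a t x\<bar> \<le> (LINT x|lborel. inverse ((1 + \<bar>t\<bar>) ^ 3) * (S 3 * Pk a (t - x) + Q 3 x))"
  proof (rule absint_le)
    show "integrable lborel (\<lambda>x. inverse ((1 + \<bar>t\<bar>) ^ 3) * (S 3 * Pk a (t - x) + Q 3 x))"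
      using Pk_shift_int[OF assms(1)] Q_int by auto
    fix x
    show "\<bar>gf a t x\<bar> \<le> inverse ((1 + \<bar>t\<bar>) ^ 3) * (S 3 * Pk a (t - x) + Q 3 x)"
    proof (cases "x < t")
      case True
      have tx: "(1 + \<bar>t\<bar>) ^ 3 \<le> (1 + \<bar>x\<bar>) ^ 3" using True assms(3) by (intro power_mono) auto
      have pos: "0 < (1 + \<bar>t\<bar>) ^ 3" by simp
      have "(1 + \<bar>t\<bar>) ^ 3 * \<bar>gf a t x\<bar> \<le> (1 + \<bar>t\<bar>) ^ 3 * (Pk a (t - x) * \<bar>\<psi> x\<bar> + \<bar>\<psi> x\<bar>)"
        using gf_pt[OF assms(2), of t x] by (intro mult_left_mono) auto
      also have "\<dots> \<le> (1 + \<bar>x\<bar>) ^ 3 * (Pk a (t - x) * \<bar>\<psi> x\<bar> + \<bar>\<psi> x\<bar>)"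
        using tx by (intro mult_right_mono) (auto simp: Pk_nonneg)
      also have "\<dots> = Pk a (t - x) * Q 3 x + Q 3 x" by (simp add: Q_def algebra_simps)
      also have "\<dots> \<le> Pk a (t - x) * S 3 + Q 3 x"
        using S[of 3 x] by (intro add_right_mono mult_left_mono) (auto simp: Pk_nonneg)
      finally have "(1 + \<bar>t\<bar>) ^ 3 * \<bar>gf a t x\<bar> \<le> S 3 * Pk a (t - x) + Q 3 x" by (simp add: algebra_simps)
      then show ?thesis using pos by (simp add: field_simps)
    next
      case False
      then show ?thesis using S_nonneg[of 3] Pk_nonneg[of a "t-x"] Q_nonneg[of 3 x]
        by (simp add: gf_def)
    qed
  qed
  also have "\<dots> = inverse ((1 + \<bar>t\<bar>) ^ 3) * (S 3 * \<kappa> a + MQ 3)"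
    using Pk_shift_int[OF assms(1), of t] Q_int[of 3]
    by (simp add: Pk_shift_eq \<kappa>_def MQ_def)
  finally show ?thesis .
qed

end

lemma taylor_scaled:
  fixes a t x :: real
  assumes a: "-1 < a" "a < 0" and t: "0 < t" and x: "x < t / 2"
  shows "\<bar>(t - x) powr a - t powr a + a * t powr (a - 1) * x\<bar> \<le> 8 * t powr (a - 2) * x^2"
proof -
  define y where "y = x / t"
  have y: "y \<le> 1/2" using x t by (simp add: y_def field_simps)
  have tx: "t - x = t * (1 - y)" using t by (simp add: y_def field_simps)
  have e1: "(t - x) powr a = t powr a * (1 - y) powr a"
    unfolding tx using y t by (simp add: powr_mult)
  have e2: "t powr (a - 1) * x = t powr a * y"
    using t by (simp add: powr_diff y_def)
  have e3: "t powr (a - 2) * x^2 = t powr a * y^2"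
    using t by (simp add: powr_diff y_def power_divide powr_numeral)
  have "(t - x) powr a - t powr a + a * t powr (a - 1) * x = (t - x) powr a - t powr a + a * (t powr (a - 1) * x)"
    by (simp add: mult.assoc)
  also have "\<dots> = t powr a * (1 - y) powr a - t powr a + a * (t powr a * y)"
    by (simp only: e1 e2)
  also have "\<dots> = t powr a * ((1 - y) powr a - 1 + a * y)" by (simp add: algebra_simps)
  finally have "(t - x) powr a - t powr a + a * t powr (a - 1) * x = t powr a * ((1 - y) powr a - 1 + a * y)" .
  then have "\<bar>(t - x) powr a - t powr a + a * t powr (a - 1) * x\<bar> = t powr a * \<bar>(1 - y) powr a - 1 + a * y\<bar>"
    by (simp add: abs_mult)
  also have "\<dots> \<le> t powr a * (8 * y^2)"
    by (intro mult_left_mono taylor_pow) (use a y in auto)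
  also have "\<dots> = 8 * (t powr (a - 2) * x^2)" by (simp add: e3)
  finally show ?thesis by simp
qed

context mw
begin

definition hf :: "real \<Rightarrow> real \<Rightarrow> real \<Rightarrow> real" where
  "hf a t x = \<psi> x * (t powr a - a * t powr (a - 1) * x)"

lemma hf_int: "integrable lborel (hf a t)"
proof -
  have "integrable lborel (\<lambda>x. t powr a * \<psi> x - (a * t powr (a - 1)) * (x * \<psi> x))"
    using int_psi int_xpsi by auto
  then show ?thesis unfolding hf_def by (simp add: algebra_simps)
qed

lemma hf_zero: "(LINT x|lborel. hf a t x) = 0"
proof -
  have "(LINT x|lborel. hf a t x) = (LINT x|lborel. t powr a * \<psi> x - (a * t powr (a - 1)) * (x * \<psi> x))"
    unfolding hf_def by (simp add: algebra_simps)
  also have "\<dots> = t powr a * (LINT x|lborel. \<psi> x) - (a * t powr (a - 1)) * (LINT x|lborel. x * \<psi> x)"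
    using int_psi int_xpsi by simp
  also have "\<dots> = 0" by (simp add: psi_int0 psi_int1)
  finally show ?thesis .
qed

lemma gf_pos:
  assumes a: "-1 < a" "a < 0" and t: "2 \<le> t"
  shows "\<bar>LINT x|lborel. gf a t x\<bar> \<le> 8 * t powr (a - 2) * MQ 2 + inverse ((1 + t/2) ^ 3) * (S 3 * \<kappa> a + 2 * MQ 4)"
proof -
  define G where "G x = 8 * t powr (a - 2) * Q 2 x + inverse ((1 + t/2) ^ 3) * (S 3 * Pk a (t - x) + 2 * Q 4 x)" for x
  have G0: "0 \<le> G x" for x unfolding G_def
    using Q_nonneg S_nonneg Pk_nonneg t by (intro add_nonneg_nonneg mult_nonneg_nonneg) auto
  have Gint: "integrable lborel G"
    unfolding G_def using Pk_shift_int[OF a(1)] Q_int by auto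
  have GI: "(LINT x|lborel. G x) = 8 * t powr (a - 2) * MQ 2 + inverse ((1 + t/2) ^ 3) * (S 3 * \<kappa> a + 2 * MQ 4)"
    unfolding G_def using Pk_shift_int[OF a(1), of t] Q_int[of 2] Q_int[of 4]
    by (simp add: Pk_shift_eq \<kappa>_def MQ_def)
  have pt: "\<bar>gf a t x - hf a t x\<bar> \<le> G x" for x
  proof (cases "x < t / 2")
    case True
    then have xt: "x < t" using t by simp
    have "gf a t x - hf a t x = \<psi> x * ((t - x) powr a - t powr a + a * t powr (a - 1) * x)"
      using xt by (simp add: gf_def hf_def algebra_simps)
    then have "\<bar>gf a t x - hf a t x\<bar> = \<bar>\<psi> x\<bar> * \<bar>(t - x) powr a - t powr a + a * t powr (a - 1) * x\<bar>"
      by (simp add: abs_mult)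
    also have "\<dots> \<le> \<bar>\<psi> x\<bar> * (8 * t powr (a - 2) * x^2)"
      by (intro mult_left_mono taylor_scaled) (use a t True in auto)
    also have "\<dots> = 8 * t powr (a - 2) * (x^2 * \<bar>\<psi> x\<bar>)" by simp
    also have "\<dots> \<le> 8 * t powr (a - 2) * Q 2 x"
    proof (intro mult_left_mono)
      have "x^2 \<le> (1 + \<bar>x\<bar>)^2" by (simp add: power2_eq_square algebra_simps)
      then show "x^2 * \<bar>\<psi> x\<bar> \<le> Q 2 x" unfolding Q_def by (intro mult_right_mono) auto
    qed auto
    also have "\<dots> \<le> G x" unfolding G_def
      using Q_nonneg S_nonneg Pk_nonneg t by (intro add_increasing2 mult_nonneg_nonneg) auto
    finally show ?thesis .
  next
    case False
    have ta1: "t powr a \<le> 1"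
    proof -
      have "t powr a \<le> t powr 0" using a t by (intro powr_mono) auto
      then show ?thesis using t by simp
    qed
    have ta2: "t powr (a - 1) \<le> 1"
    proof -
      have "t powr (a - 1) \<le> t powr 0" using a t by (intro powr_mono) auto
      then show ?thesis using t by simp
    qed
    have "\<bar>t powr a - a * t powr (a - 1) * x\<bar> \<le> \<bar>t powr a\<bar> + \<bar>a * t powr (a - 1) * x\<bar>"
      by (rule abs_triangle_ineq4)
    also have "\<dots> = t powr a + \<bar>a\<bar> * t powr (a - 1) * \<bar>x\<bar>" by (simp add: abs_mult)
    also have "\<dots> \<le> 1 + 1 * 1 * \<bar>x\<bar>"
      using ta1 ta2 a by (intro add_mono mult_mono) auto
    finally have hb: "\<bar>hf a t x\<bar> \<le> \<bar>\<psi> x\<bar> * (1 + \<bar>x\<bar>)"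
      unfolding hf_def abs_mult by (intro mult_left_mono) auto
    have xt: "(1 + t/2) ^ 3 \<le> (1 + \<bar>x\<bar>) ^ 3" using False t by (intro power_mono) auto
    have pos: "0 < (1 + t/2) ^ 3" using t by simp
    have "\<bar>gf a t x - hf a t x\<bar> \<le> Pk a (t - x) * \<bar>\<psi> x\<bar> + \<bar>\<psi> x\<bar> + \<bar>\<psi> x\<bar> * (1 + \<bar>x\<bar>)"
      using gf_pt[of a t x] hb a by linarith
    then have "(1 + t/2) ^ 3 * \<bar>gf a t x - hf a t x\<bar> \<le> (1 + t/2) ^ 3 * (Pk a (t - x) * \<bar>\<psi> x\<bar> + \<bar>\<psi> x\<bar> + \<bar>\<psi> x\<bar> * (1 + \<bar>x\<bar>))"
      using pos by (intro mult_left_mono) auto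
    also have "\<dots> \<le> (1 + \<bar>x\<bar>) ^ 3 * (Pk a (t - x) * \<bar>\<psi> x\<bar> + \<bar>\<psi> x\<bar> + \<bar>\<psi> x\<bar> * (1 + \<bar>x\<bar>))"
      using xt by (intro mult_right_mono) (auto simp: Pk_nonneg)
    also have "\<dots> = Pk a (t - x) * Q 3 x + Q 3 x + Q 4 x"
    proof -
      have "(1 + \<bar>x\<bar>) ^ 4 = (1 + \<bar>x\<bar>) ^ 3 * (1 + \<bar>x\<bar>)" by (simp add: power_Suc2[symmetric] numeral_eq_Suc)
      then show ?thesis by (simp add: Q_def algebra_simps)
    qed
    also have "\<dots> \<le> Pk a (t - x) * S 3 + Q 4 x + Q 4 x"
    proof -
      have "Pk a (t - x) * Q 3 x \<le> Pk a (t - x) * S 3" using S[of 3 x] by (intro mult_left_mono) (auto simp: Pk_nonneg)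
      moreover have "Q 3 x \<le> Q 4 x" unfolding Q_def by (intro mult_right_mono power_increasing) auto
      ultimately show ?thesis by linarith
    qed
    finally have "(1 + t/2) ^ 3 * \<bar>gf a t x - hf a t x\<bar> \<le> S 3 * Pk a (t - x) + 2 * Q 4 x" by (simp add: algebra_simps)
    then have "\<bar>gf a t x - hf a t x\<bar> \<le> inverse ((1 + t/2) ^ 3) * (S 3 * Pk a (t - x) + 2 * Q 4 x)"
      using pos by (simp add: field_simps)
    also have "\<dots> \<le> G x" unfolding G_def
      using Q_nonneg[of 2 x] by (intro add_increasing) auto
    finally show ?thesis .
  qed
  show ?thesis
  proof (cases "integrable lborel (gf a t)")
    case True
    have "(LINT x|lborel. gf a t x) = (LINT x|lborel. gf a t x - hf a t x)"
      using True hf_int by (simp add: hf_zero)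
    also have "\<bar>\<dots>\<bar> \<le> (LINT x|lborel. G x)" by (rule absint_le[OF pt Gint])
    finally show ?thesis unfolding GI .
  next
    case False
    then have "(LINT x|lborel. gf a t x) = 0" by (simp add: not_integrable_integral_eq)
    then show ?thesis using GI G0 integral_nonneg_AE[of G lborel] by simp
  qed
qed

end


lemma e1: assumes "1 \<le> (b::real)" shows "inverse (b ^ 3) \<le> b powr (-5/2)"
proof -
  have "inverse (b ^ 3) = b powr (-3)" using assms by (simp add: powr_minus powr_numeral)
  also have "\<dots> \<le> b powr (-5/2)" using assms by (intro powr_mono) auto
  finally show ?thesis .
qed

lemma e2: assumes "\<bar>u::real\<bar> \<le> 2" shows "1 \<le> 3 powr (5/2) * (1 + \<bar>u\<bar>) powr (-5/2)"
proof -
  have "3 powr (-5/2) \<le> (1 + \<bar>u\<bar>) powr (-5/2)" using assms by (intro powr_mono2') auto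
  then have "3 powr (5/2) * 3 powr (-5/2) \<le> 3 powr (5/2) * (1 + \<bar>u\<bar>) powr (-5/2)"
    by (intro mult_left_mono) auto
  moreover have "3 powr (5/2) * 3 powr (-5/2) = (1::real)" by (simp add: powr_add[symmetric])
  ultimately show ?thesis by linarith
qed

lemma e3: assumes "2 \<le> (u::real)" "a < -1/2"
  shows "u powr (a - 2) \<le> 2 powr (5/2) * (1 + u) powr (-5/2)"
proof -
  have "u powr (a - 2) \<le> u powr (-5/2)" using assms by (intro powr_mono) auto
  also have "\<dots> \<le> ((1 + u) / 2) powr (-5/2)" using assms by (intro powr_mono2') auto
  also have "\<dots> = (1 + u) powr (-5/2) / 2 powr (-5/2)"
    using assms by (simp add: powr_divide)
  also have "\<dots> = 2 powr (5/2) * (1 + u) powr (-5/2)"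
  proof -
    have m: "(2::real) powr (-5/2) = inverse (2 powr (5/2))" using powr_minus[of 2 "5/2"] by simp
    have gen: "\<And>x y::real. x / inverse y = y * x" by (simp add: field_simps)
    show ?thesis by (subst m) (rule gen)
  qed
  finally show ?thesis .
qed

lemma e4: assumes "0 \<le> (u::real)" shows "inverse ((1 + u/2) ^ 3) \<le> 8 * inverse ((1 + u) ^ 3)"
proof -
  have "(1 + u) ^ 3 \<le> (2 + u) ^ 3" using assms by (intro power_mono) auto
  moreover have "(2 + u) ^ 3 = 8 * (1 + u/2) ^ 3" by (simp add: power3_eq_cube algebra_simps)
  ultimately have "(1 + u) ^ 3 \<le> 8 * (1 + u/2) ^ 3" by simp
  then show ?thesis using assms by (simp add: field_simps)
qed

context mw
begin

lemma psiH_eq: "psiH \<psi> H u = (1 / Gamma (H - 1/2)) * (LINT x|lborel. gf (H - 3/2) u x)"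
  by (simp add: psiH_def gf_def)

lemma gf_decay:
  assumes a: "-1 < a" "a < -1/2"
  shows "\<exists>K\<ge>0. \<forall>u. \<bar>LINT x|lborel. gf a u x\<bar> \<le> K * (1 + \<bar>u\<bar>) powr (-5/2)"
proof -
  define B0 where "B0 = S 0 * \<kappa> a + MQ 0"
  define B1 where "B1 = S 3 * \<kappa> a + MQ 3"
  define B3 where "B3 = S 3 * \<kappa> a + 2 * MQ 4"
  have nn: "0 \<le> B0" "0 \<le> B1" "0 \<le> B3" "0 \<le> MQ 2"
    unfolding B0_def B1_def B3_def using S_nonneg kappa_nonneg MQ_nonneg by auto
  define K where "K = B0 * 3 powr (5/2) + B1 + 8 * MQ 2 * 2 powr (5/2) + 8 * B3"
  have K0: "0 \<le> K" unfolding K_def using nn by auto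
  show ?thesis
  proof (intro exI conjI allI)
    fix u :: real
    define E where "E = (1 + \<bar>u\<bar>) powr (-5/2)"
    have E0: "0 \<le> E" by (simp add: E_def)
    have "\<bar>LINT x|lborel. gf a u x\<bar> \<le> K * E"
    proof (cases "\<bar>u\<bar> \<le> 2")
      case True
      have "\<bar>LINT x|lborel. gf a u x\<bar> \<le> B0" unfolding B0_def using gf_bound0 a by simp
      also have "\<dots> \<le> B0 * (3 powr (5/2) * E)"
        using e2[OF True] nn by (simp add: E_def mult_le_cancel_left1)
      also have "\<dots> \<le> K * E" unfolding K_def using nn E0
        by (simp add: algebra_simps add_increasing2 mult_nonneg_nonneg)
      finally show ?thesis .
    next
      case False
      show ?thesis
      proof (cases "u < 0")
        case True
        then have u: "u \<le> -1" using False by simp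
        have "\<bar>LINT x|lborel. gf a u x\<bar> \<le> inverse ((1 + \<bar>u\<bar>) ^ 3) * B1"
          unfolding B1_def using gf_neg[of a u] a u by (simp add: mult.commute)
        also have "\<dots> \<le> E * B1" unfolding E_def using nn by (intro mult_right_mono e1) auto
        also have "\<dots> \<le> K * E" unfolding K_def using nn E0
          by (simp add: algebra_simps add_increasing2 add_increasing mult_nonneg_nonneg)
        finally show ?thesis .
      next
        case u0: False
        then have u: "2 \<le> u" using False by simp
        have "\<bar>LINT x|lborel. gf a u x\<bar> \<le> 8 * u powr (a - 2) * MQ 2 + inverse ((1 + u/2) ^ 3) * B3"
          unfolding B3_def using gf_pos[of a u] a u by simp
        also have "\<dots> \<le> 8 * (2 powr (5/2) * E) * MQ 2 + (8 * E) * B3"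
        proof (intro add_mono mult_right_mono mult_left_mono)
          show "u powr (a - 2) \<le> 2 powr (5/2) * E" using e3[OF u a(2)] u by (simp add: E_def)
          have "inverse ((1 + u/2) ^ 3) \<le> 8 * inverse ((1 + u) ^ 3)" using u by (intro e4) auto
          also have "\<dots> \<le> 8 * E" using e1[of "1 + u"] u by (simp add: E_def)
          finally show "inverse ((1 + u/2) ^ 3) \<le> 8 * E" .
        qed (use nn in auto)
        also have "\<dots> \<le> K * E" unfolding K_def using nn E0
          by (simp add: algebra_simps add_increasing mult_nonneg_nonneg)
        finally show ?thesis .
      qed
    qed
    then show "\<bar>LINT x|lborel. gf a u x\<bar> \<le> K * (1 + \<bar>u\<bar>) powr (-5/2)" by (simp add: E_def)
  qed (rule K0)
qed

lemma psiH_decay: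
  assumes "1/2 < H" "H < 1"
  shows "\<exists>K\<ge>0. \<forall>u. \<bar>psiH \<psi> H u\<bar> \<le> K * (1 + \<bar>u\<bar>) powr (-5/2)"
proof -
  obtain K where K: "K \<ge> 0" "\<And>u. \<bar>LINT x|lborel. gf (H - 3/2) u x\<bar> \<le> K * (1 + \<bar>u\<bar>) powr (-5/2)"
    using gf_decay[of "H - 3/2"] assms by auto
  show ?thesis
  proof (intro exI conjI allI)
    fix u
    have "\<bar>psiH \<psi> H u\<bar> = \<bar>1 / Gamma (H - 1/2)\<bar> * \<bar>LINT x|lborel. gf (H - 3/2) u x\<bar>"
      by (simp add: psiH_eq abs_mult)
    also have "\<dots> \<le> \<bar>1 / Gamma (H - 1/2)\<bar> * (K * (1 + \<bar>u\<bar>) powr (-5/2))"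
      by (intro mult_left_mono K) auto
    finally show "\<bar>psiH \<psi> H u\<bar> \<le> (\<bar>1 / Gamma (H - 1/2)\<bar> * K) * (1 + \<bar>u\<bar>) powr (-5/2)" by simp
  qed (use K in auto)
qed

end


lemma ln_ge_1: assumes "3 \<le> (A::real)" shows "1 \<le> ln A"
proof -
  have "exp 1 \<le> A" using exp_le assms by linarith
  then have "ln (exp 1) \<le> ln A" using assms by (subst ln_le_cancel_iff) auto
  then show ?thesis by simp
qed

lemma ln_le_sqrt2: assumes "0 < (y::real)" shows "ln y \<le> 2 * y powr (1/2)"
proof -
  have "ln (y powr (1/2)) \<le> y powr (1/2) - 1" using assms by (intro ln_le_minus_one) auto
  moreover have "ln (y powr (1/2)) = ln y / 2" using assms by (simp add: ln_powr)
  ultimately show ?thesis by simp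
qed

lemma weight:
  fixes j k :: int and x :: real
  assumes x: "0 \<le> x" "x \<le> 1"
  shows "sqrt (ln (3 + real_of_int \<bar>j\<bar> + real_of_int \<bar>k\<bar>))
    \<le> 3 * sqrt (ln (3 + real_of_int \<bar>j\<bar> + 2 powr real_of_int j)) * (1 + \<bar>2 powr real_of_int j * x - real_of_int k\<bar>) powr (1/4)"
proof -
  define u where "u = 2 powr real_of_int j * x - real_of_int k"
  define A where "A = 3 + real_of_int \<bar>j\<bar> + 2 powr real_of_int j"
  define w where "w = (1 + \<bar>u\<bar>) powr (1/4)"
  have A3: "3 \<le> A" unfolding A_def by simp
  have w1: "1 \<le> w" unfolding w_def by (rule ge_one_powr_ge_zero) auto
  have "2 powr real_of_int j * x \<le> 2 powr real_of_int j" using x by simp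
  moreover have "0 \<le> 2 powr real_of_int j * x" using x by simp
  ultimately have kb: "real_of_int \<bar>k\<bar> \<le> \<bar>u\<bar> + 2 powr real_of_int j"
    unfolding u_def by linarith
  have "3 + real_of_int \<bar>j\<bar> + real_of_int \<bar>k\<bar> \<le> A + A * \<bar>u\<bar>"
  proof -
    have "\<bar>u\<bar> \<le> A * \<bar>u\<bar>" using A3 by (simp add: mult_le_cancel_right1)
    then show ?thesis using kb unfolding A_def by linarith
  qed
  then have le1: "3 + real_of_int \<bar>j\<bar> + real_of_int \<bar>k\<bar> \<le> A * (1 + \<bar>u\<bar>)" by (simp add: algebra_simps)
  have "ln (3 + real_of_int \<bar>j\<bar> + real_of_int \<bar>k\<bar>) \<le> ln (A * (1 + \<bar>u\<bar>))"
    using le1 by (subst ln_le_cancel_iff) auto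
  also have "\<dots> = ln A + ln (1 + \<bar>u\<bar>)" using A3 by (simp add: ln_mult)
  finally have l1: "ln (3 + real_of_int \<bar>j\<bar> + real_of_int \<bar>k\<bar>) \<le> ln A + ln (1 + \<bar>u\<bar>)" .
  have lA: "1 \<le> ln A" using A3 by (rule ln_ge_1)
  have lu: "0 \<le> ln (1 + \<bar>u\<bar>)" by simp
  have "sqrt (ln (3 + real_of_int \<bar>j\<bar> + real_of_int \<bar>k\<bar>)) \<le> sqrt (ln A + ln (1 + \<bar>u\<bar>))"
    using l1 by simp
  also have "\<dots> \<le> sqrt (ln A) + sqrt (ln (1 + \<bar>u\<bar>))"
    using lA lu by (intro sqrt_add_le_add_sqrt) auto
  also have "sqrt (ln (1 + \<bar>u\<bar>)) \<le> sqrt 2 * w"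
  proof -
    have "sqrt (ln (1 + \<bar>u\<bar>)) \<le> sqrt (2 * (1 + \<bar>u\<bar>) powr (1/2))"
      using ln_le_sqrt2[of "1 + \<bar>u\<bar>"] by simp
    also have "\<dots> = sqrt 2 * sqrt ((1 + \<bar>u\<bar>) powr (1/2))" by (simp add: real_sqrt_mult)
    also have "sqrt ((1 + \<bar>u\<bar>) powr (1/2)) = w"
      unfolding w_def by (simp add: powr_half_sqrt[symmetric] powr_powr)
    finally show ?thesis .
  qed
  also have "sqrt (ln A) + sqrt 2 * w \<le> sqrt (ln A) * (3 * w)"
  proof -
    have s1: "1 \<le> sqrt (ln A)" using lA by simp
    have "sqrt 2 \<le> sqrt ((2::real)^2)" by (intro real_sqrt_le_mono) auto
    then have s2: "sqrt 2 \<le> (2::real)" by simp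
    have "sqrt 2 * w \<le> 2 * w" using s2 w1 by (intro mult_right_mono) auto
    also have "\<dots> \<le> sqrt (ln A) * (2 * w)" using s1 w1 by (simp add: mult_le_cancel_right1)
    finally have "sqrt 2 * w \<le> sqrt (ln A) * (2 * w)" .
    moreover have "sqrt (ln A) \<le> sqrt (ln A) * w" using s1 w1 by (simp add: mult_le_cancel_left1)
    ultimately show ?thesis by (simp add: algebra_simps)
  qed
  finally show ?thesis unfolding A_def w_def u_def by (simp add: algebra_simps)
qed

definition Z :: "real \<Rightarrow> real" where "Z p = (\<Sum>n. (1 + real n) powr (- p))"

lemma Z_summable: assumes "1 < p" shows "summable (\<lambda>n. (1 + real n) powr (- p))"
proof -
  have "summable (\<lambda>n. real n powr (- p))" using assms by (subst summable_real_powr_iff) auto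
  then have "summable (\<lambda>n. real (Suc n) powr (- p))" by (subst summable_Suc_iff)
  then show ?thesis by (simp add: add.commute)
qed

lemma sum_le_Z:
  assumes "finite S" "S \<subseteq> {k::int. real_of_int k \<le> c}" "1 < p"
  shows "(\<Sum>k\<in>S. (1 + (c - real_of_int k)) powr (- p)) \<le> Z p"
proof -
  define \<phi> where "\<phi> k = nat (\<lfloor>c\<rfloor> - k)" for k
  define g where "g = (\<lambda>n. (1 + real n) powr (- p))"
  have fl: "k \<le> \<lfloor>c\<rfloor>" if "k \<in> S" for k using assms(2) that by (auto simp: le_floor_iff)
  have inj: "inj_on \<phi> S"
    unfolding inj_on_def \<phi>_def using fl by (auto simp: nat_eq_iff)
  have "(\<Sum>k\<in>S. (1 + (c - real_of_int k)) powr (- p)) \<le> (\<Sum>k\<in>S. g (\<phi> k))"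
  proof (rule sum_mono)
    fix k assume k: "k \<in> S"
    have "real (\<phi> k) = real_of_int (\<lfloor>c\<rfloor> - k)" using fl[OF k] by (simp add: \<phi>_def)
    also have "\<dots> \<le> c - real_of_int k" by (simp add: algebra_simps)
    finally have "1 + real (\<phi> k) \<le> 1 + (c - real_of_int k)" by simp
    then show "(1 + (c - real_of_int k)) powr (- p) \<le> g (\<phi> k)"
      unfolding g_def using assms(3) by (intro powr_mono2') auto
  qed
  also have "\<dots> = sum g (\<phi> ` S)" by (simp add: sum.reindex[OF inj])
  also have "\<dots> \<le> suminf g"
    by (rule sum_le_suminf) (use Z_summable[OF assms(3)] assms(1) in \<open>auto simp: g_def\<close>)
  finally show ?thesis by (simp add: Z_def g_def)
qed

lemma sum_ge_Z:
  assumes "finite S" "S \<subseteq> {k::int. c \<le> real_of_int k}" "1 < p"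
  shows "(\<Sum>k\<in>S. (1 + (real_of_int k - c)) powr (- p)) \<le> Z p"
proof -
  have "(\<Sum>k\<in>S. (1 + (real_of_int k - c)) powr (- p)) = (\<Sum>k\<in>uminus ` S. (1 + (- c - real_of_int k)) powr (- p))"
    by (subst sum.reindex) (auto simp: inj_on_def algebra_simps)
  also have "\<dots> \<le> Z p"
    by (rule sum_le_Z) (use assms in auto)
  finally show ?thesis .
qed


lemma int_lt:
  fixes \<alpha> b m M q :: real
  assumes a: "0 < \<alpha>" and mM: "m \<le> M" and b: "b \<le> \<alpha> * m" and q: "1 < q"
  shows "(\<lambda>x. (1 + \<bar>\<alpha> * x - b\<bar>) powr (- q)) integrable_on {m..M}"
    "integral {m..M} (\<lambda>x. (1 + \<bar>\<alpha> * x - b\<bar>) powr (- q)) \<le> (1 + (\<alpha> * m - b)) powr (1 - q) / (\<alpha> * (q - 1))"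
proof -
  define F where "F x = - ((1 + (\<alpha> * x - b)) powr (1 - q) / (\<alpha> * (q - 1)))" for x
  have pos: "0 < 1 + (\<alpha> * x - b)" if "x \<in> {m..M}" for x
  proof -
    have "\<alpha> * m \<le> \<alpha> * x" using that a by (intro mult_left_mono) auto
    then show ?thesis using b by linarith
  qed
  have der: "(F has_vector_derivative (1 + (\<alpha> * x - b)) powr (- q)) (at x within {m..M})"
    if x: "x \<in> {m..M}" for x
  proof -
    have g: "DERIV (\<lambda>x. 1 + (\<alpha> * x - b)) x :> \<alpha>" by (auto intro!: derivative_eq_intros)
    have "DERIV (\<lambda>x. (1 + (\<alpha> * x - b)) powr (1 - q)) x :> (1 - q) * (1 + (\<alpha> * x - b)) powr (1 - q - of_nat 1) * \<alpha>"
      by (rule DERIV_fun_powr[OF g pos[OF x]])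
    then have "DERIV F x :> - ((1 - q) * (1 + (\<alpha> * x - b)) powr (1 - q - of_nat 1) * \<alpha> / (\<alpha> * (q - 1)))"
      unfolding F_def by (rule DERIV_minus[OF DERIV_cdivide])
    moreover have "- ((1 - q) * (1 + (\<alpha> * x - b)) powr (1 - q - of_nat 1) * \<alpha> / (\<alpha> * (q - 1))) = (1 + (\<alpha> * x - b)) powr (- q)"
      using a q by (simp add: field_simps)
    ultimately show ?thesis
      by (simp add: has_real_derivative_iff_has_vector_derivative[symmetric] has_field_derivative_at_within)
  qed
  have ftc: "((\<lambda>x. (1 + (\<alpha> * x - b)) powr (- q)) has_integral F M - F m) {m..M}"
    by (rule fundamental_theorem_of_calculus[OF mM der])
  have eqf: "(1 + (\<alpha> * x - b)) powr (- q) = (1 + \<bar>\<alpha> * x - b\<bar>) powr (- q)" if "x \<in> {m..M}" for x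
  proof -
    have "\<alpha> * m \<le> \<alpha> * x" using that a by (intro mult_left_mono) auto
    then have "0 \<le> \<alpha> * x - b" using b by linarith
    then have "\<bar>\<alpha> * x - b\<bar> = \<alpha> * x - b" by (rule abs_of_nonneg)
    then show ?thesis by simp
  qed
  have hi: "((\<lambda>x. (1 + \<bar>\<alpha> * x - b\<bar>) powr (- q)) has_integral F M - F m) {m..M}"
    by (rule has_integral_cong[THEN iffD1, OF _ ftc]) (rule eqf)
  then show "(\<lambda>x. (1 + \<bar>\<alpha> * x - b\<bar>) powr (- q)) integrable_on {m..M}" by blast
  have "F M - F m \<le> - F m" unfolding F_def using a q by (simp add: divide_nonneg_pos)
  then show "integral {m..M} (\<lambda>x. (1 + \<bar>\<alpha> * x - b\<bar>) powr (- q)) \<le> (1 + (\<alpha> * m - b)) powr (1 - q) / (\<alpha> * (q - 1))"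
    using integral_unique[OF hi] by (simp add: F_def)
qed

lemma int_gt:
  fixes \<alpha> b m M q :: real
  assumes a: "0 < \<alpha>" and mM: "m \<le> M" and b: "\<alpha> * M \<le> b" and q: "1 < q"
  shows "(\<lambda>x. (1 + \<bar>\<alpha> * x - b\<bar>) powr (- q)) integrable_on {m..M}"
    "integral {m..M} (\<lambda>x. (1 + \<bar>\<alpha> * x - b\<bar>) powr (- q)) \<le> (1 + (b - \<alpha> * M)) powr (1 - q) / (\<alpha> * (q - 1))"
proof -
  define F where "F x = (1 + (b - \<alpha> * x)) powr (1 - q) / (\<alpha> * (q - 1))" for x
  have pos: "0 < 1 + (b - \<alpha> * x)" if "x \<in> {m..M}" for x
  proof -
    have "\<alpha> * x \<le> \<alpha> * M" using that a by (intro mult_left_mono) auto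
    then show ?thesis using b by linarith
  qed
  have der: "(F has_vector_derivative (1 + (b - \<alpha> * x)) powr (- q)) (at x within {m..M})"
    if x: "x \<in> {m..M}" for x
  proof -
    have g: "DERIV (\<lambda>x. 1 + (b - \<alpha> * x)) x :> - \<alpha>" by (auto intro!: derivative_eq_intros)
    have "DERIV (\<lambda>x. (1 + (b - \<alpha> * x)) powr (1 - q)) x :> (1 - q) * (1 + (b - \<alpha> * x)) powr (1 - q - of_nat 1) * - \<alpha>"
      by (rule DERIV_fun_powr[OF g pos[OF x]])
    then have "DERIV F x :> (1 - q) * (1 + (b - \<alpha> * x)) powr (1 - q - of_nat 1) * - \<alpha> / (\<alpha> * (q - 1))"
      unfolding F_def by (rule DERIV_cdivide)
    moreover have "(1 - q) * (1 + (b - \<alpha> * x)) powr (1 - q - of_nat 1) * - \<alpha> / (\<alpha> * (q - 1)) = (1 + (b - \<alpha> * x)) powr (- q)"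
      using a q by (simp add: field_simps)
    ultimately show ?thesis
      by (simp add: has_real_derivative_iff_has_vector_derivative[symmetric] has_field_derivative_at_within)
  qed
  have ftc: "((\<lambda>x. (1 + (b - \<alpha> * x)) powr (- q)) has_integral F M - F m) {m..M}"
    by (rule fundamental_theorem_of_calculus[OF mM der])
  have eqf: "(1 + (b - \<alpha> * x)) powr (- q) = (1 + \<bar>\<alpha> * x - b\<bar>) powr (- q)" if "x \<in> {m..M}" for x
  proof -
    have "\<alpha> * x \<le> \<alpha> * M" using that a by (intro mult_left_mono) auto
    then have "\<alpha> * x - b \<le> 0" using b by linarith
    then have "\<bar>\<alpha> * x - b\<bar> = b - \<alpha> * x" by simp
    then show ?thesis by simp
  qed
  have hi: "((\<lambda>x. (1 + \<bar>\<alpha> * x - b\<bar>) powr (- q)) has_integral F M - F m) {m..M}"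
    by (rule has_integral_cong[THEN iffD1, OF _ ftc]) (rule eqf)
  then show "(\<lambda>x. (1 + \<bar>\<alpha> * x - b\<bar>) powr (- q)) integrable_on {m..M}" by blast
  have "F M - F m \<le> F M" unfolding F_def using a q by (simp add: divide_nonneg_pos)
  then show "integral {m..M} (\<lambda>x. (1 + \<bar>\<alpha> * x - b\<bar>) powr (- q)) \<le> (1 + (b - \<alpha> * M)) powr (1 - q) / (\<alpha> * (q - 1))"
    using integral_unique[OF hi] by (simp add: F_def)
qed


definition Lam :: "int \<Rightarrow> real" where
  "Lam j = sqrt (ln (3 + real_of_int \<bar>j\<bar> + 2 powr real_of_int j))"

definition phi :: "real \<Rightarrow> int \<Rightarrow> int \<Rightarrow> real \<Rightarrow> real" where
  "phi K j k x = 3 * K * Lam j * (1 + \<bar>2 powr real_of_int j * x - real_of_int k\<bar>) powr (- (9/4))"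

lemma Lam_nonneg: "0 \<le> Lam j" by (simp add: Lam_def)

lemma phi_nonneg: "0 \<le> K \<Longrightarrow> 0 \<le> phi K j k x" by (simp add: phi_def Lam_nonneg)

lemma phi_cont: "continuous_on A (phi K j k)"
  unfolding phi_def by (intro continuous_intros) auto

lemma PW:
  fixes f :: "real \<Rightarrow> real"
  assumes K: "0 \<le> K" "\<And>u. \<bar>f u\<bar> \<le> K * (1 + \<bar>u\<bar>) powr (-5/2)" and x: "0 \<le> x" "x \<le> 1"
  shows "sqrt (ln (3 + real_of_int \<bar>j\<bar> + real_of_int \<bar>k\<bar>)) * \<bar>f (2 powr real_of_int j * x - real_of_int k)\<bar> \<le> phi K j k x"
proof -
  define u where "u = 2 powr real_of_int j * x - real_of_int k"
  have w: "sqrt (ln (3 + real_of_int \<bar>j\<bar> + real_of_int \<bar>k\<bar>)) \<le> 3 * Lam j * (1 + \<bar>u\<bar>) powr (1/4)"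
    using weight[OF x, of j k] by (simp add: Lam_def u_def)
  have "sqrt (ln (3 + real_of_int \<bar>j\<bar> + real_of_int \<bar>k\<bar>)) * \<bar>f u\<bar> \<le> (3 * Lam j * (1 + \<bar>u\<bar>) powr (1/4)) * (K * (1 + \<bar>u\<bar>) powr (-5/2))"
    by (intro mult_mono w K(2)) (auto simp: Lam_nonneg)
  also have "\<dots> = 3 * K * Lam j * ((1 + \<bar>u\<bar>) powr (1/4) * (1 + \<bar>u\<bar>) powr (-5/2))" by simp
  also have "(1 + \<bar>u\<bar>) powr (1/4) * (1 + \<bar>u\<bar>) powr (-5/2) = (1 + \<bar>u\<bar>) powr (- (9/4))"
    by (simp add: powr_add[symmetric])
  finally show ?thesis by (simp add: phi_def u_def)
qed

lemma sum_two_sided: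
  assumes "finite S"
  shows "(\<Sum>k\<in>S. (1 + \<bar>y - real_of_int k\<bar>) powr (- (9/4))) \<le> 2 * Z (9/4)"
proof -
  have "(\<Sum>k\<in>S. (1 + \<bar>y - real_of_int k\<bar>) powr (- (9/4))) =
     (\<Sum>k\<in>S \<inter> {k. real_of_int k \<le> y}. (1 + \<bar>y - real_of_int k\<bar>) powr (- (9/4))) +
     (\<Sum>k\<in>S - {k. real_of_int k \<le> y}. (1 + \<bar>y - real_of_int k\<bar>) powr (- (9/4)))"
    using assms by (rule sum.Int_Diff)
  also have "(\<Sum>k\<in>S \<inter> {k. real_of_int k \<le> y}. (1 + \<bar>y - real_of_int k\<bar>) powr (- (9/4)))
      = (\<Sum>k\<in>S \<inter> {k. real_of_int k \<le> y}. (1 + (y - real_of_int k)) powr (- (9/4)))"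
    by (intro sum.cong) auto
  also have "\<dots> \<le> Z (9/4)" by (rule sum_le_Z) (use assms in auto)
  also have "(\<Sum>k\<in>S - {k. real_of_int k \<le> y}. (1 + \<bar>y - real_of_int k\<bar>) powr (- (9/4)))
      = (\<Sum>k\<in>S - {k. real_of_int k \<le> y}. (1 + (real_of_int k - y)) powr (- (9/4)))"
    by (intro sum.cong) auto
  also have "\<dots> \<le> Z (9/4)" by (rule sum_ge_Z) (use assms in auto)
  finally show ?thesis by simp
qed


lemma main_sum:
  fixes f1 f2 :: "real \<Rightarrow> real" and j1 j2 :: int and m M :: real and T :: "(int \<times> int) set" and KS :: "int set"
  assumes K1: "0 \<le> K1" "\<And>u. \<bar>f1 u\<bar> \<le> K1 * (1 + \<bar>u\<bar>) powr (-5/2)"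
    and K2: "0 \<le> K2" "\<And>u. \<bar>f2 u\<bar> \<le> K2 * (1 + \<bar>u\<bar>) powr (-5/2)"
    and mM: "0 \<le> m" "m \<le> M" "M \<le> 1"
    and T: "finite T" "snd ` T \<subseteq> KS"
    and IB: "\<And>S2. finite S2 \<Longrightarrow> S2 \<subseteq> KS \<Longrightarrow>
       (\<Sum>k\<in>S2. integral {m..M} (\<lambda>x. (1 + \<bar>2 powr real_of_int j2 * x - real_of_int k\<bar>) powr (- (9/4))))
         \<le> 2 powr (- real_of_int j2) * (4/5) * Z (5/4)"
  shows "(\<Sum>p\<in>T. (case p of (k1, k2) \<Rightarrow> Lw j1 j2 k1 k2 *
      \<bar>LINT x:{m..M}|lborel. f1 (2 powr real_of_int j1 * x - real_of_int k1) * f2 (2 powr real_of_int j2 * x - real_of_int k2)\<bar>))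
    \<le> (3 * K1 * Lam j1 * (2 * Z (9/4))) * (3 * K2 * Lam j2) * (2 powr (- real_of_int j2) * (4/5) * Z (5/4))"
proof -
  define Fv where "Fv k1 k2 = Lw j1 j2 k1 k2 *
      \<bar>LINT x:{m..M}|lborel. f1 (2 powr real_of_int j1 * x - real_of_int k1) * f2 (2 powr real_of_int j2 * x - real_of_int k2)\<bar>" for k1 k2
  define S1 where "S1 = fst ` T"
  define S2 where "S2 = snd ` T"
  have fin: "finite S1" "finite S2" using T by (auto simp: S1_def S2_def)
  have TS: "T \<subseteq> S1 \<times> S2" by (force simp: S1_def S2_def)
  have Lw0: "0 \<le> Lw j1 j2 k1 k2" for k1 k2 by (simp add: Lw_def)
  have Fv0: "0 \<le> Fv k1 k2" for k1 k2 by (simp add: Fv_def Lw0)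
  define Phi where "Phi k1 k2 x = phi K1 j1 k1 x * phi K2 j2 k2 x" for k1 k2 x
  have Phi_cont: "continuous_on {m..M} (Phi k1 k2)" for k1 k2
    unfolding Phi_def by (intro continuous_intros phi_cont)
  have Phi_int: "Phi k1 k2 integrable_on {m..M}" for k1 k2
    by (rule integrable_continuous_interval[OF Phi_cont])
  have one: "Fv k1 k2 \<le> integral {m..M} (Phi k1 k2)" for k1 k2
  proof -
    define g where "g x = f1 (2 powr real_of_int j1 * x - real_of_int k1) * f2 (2 powr real_of_int j2 * x - real_of_int k2)" for x
    have si: "set_integrable lborel {m..M} (Phi k1 k2)"
      by (rule borel_integrable_atLeastAtMost'[OF Phi_cont])
    have "Fv k1 k2 = \<bar>LINT x|lborel. Lw j1 j2 k1 k2 * (indicator {m..M} x *\<^sub>R g x)\<bar>"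
      by (simp add: Fv_def g_def set_lebesgue_integral_def abs_mult Lw0)
    also have "\<dots> \<le> (LINT x|lborel. indicator {m..M} x *\<^sub>R Phi k1 k2 x)"
    proof (rule absint_le)
      show "integrable lborel (\<lambda>x. indicator {m..M} x *\<^sub>R Phi k1 k2 x)"
        using si by (simp add: set_integrable_def)
      fix x
      show "\<bar>Lw j1 j2 k1 k2 * (indicator {m..M} x *\<^sub>R g x)\<bar> \<le> indicator {m..M} x *\<^sub>R Phi k1 k2 x"
      proof (cases "x \<in> {m..M}")
        case True
        then have x: "0 \<le> x" "x \<le> 1" using mM by auto
        have "\<bar>Lw j1 j2 k1 k2 * g x\<bar> =
          (sqrt (ln (3 + real_of_int \<bar>j1\<bar> + real_of_int \<bar>k1\<bar>)) * \<bar>f1 (2 powr real_of_int j1 * x - real_of_int k1)\<bar>) *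
          (sqrt (ln (3 + real_of_int \<bar>j2\<bar> + real_of_int \<bar>k2\<bar>)) * \<bar>f2 (2 powr real_of_int j2 * x - real_of_int k2)\<bar>)"
          by (simp add: Lw_def g_def abs_mult)
        also have "\<dots> \<le> phi K1 j1 k1 x * phi K2 j2 k2 x"
          by (intro mult_mono PW[OF K1 x] PW[OF K2 x] phi_nonneg K1 K2) auto
        finally show ?thesis using True by (simp add: Phi_def)
      qed simp
    qed
    also have "\<dots> = integral {m..M} (Phi k1 k2)"
      using set_borel_integral_eq_integral(2)[OF si] by (simp add: set_lebesgue_integral_def)
    finally show ?thesis .
  qed
  define A1 where "A1 = 3 * K1 * Lam j1 * (2 * Z (9/4))"
  have A1b: "(\<Sum>k1\<in>S1. phi K1 j1 k1 x) \<le> A1" for x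
  proof -
    have "(\<Sum>k1\<in>S1. phi K1 j1 k1 x) = 3 * K1 * Lam j1 * (\<Sum>k1\<in>S1. (1 + \<bar>2 powr real_of_int j1 * x - real_of_int k1\<bar>) powr (- (9/4)))"
      by (simp add: phi_def sum_distrib_left)
    also have "\<dots> \<le> A1" unfolding A1_def
      using K1 Lam_nonneg by (intro mult_left_mono sum_two_sided fin) auto
    finally show ?thesis .
  qed
  have phi2_int: "phi K2 j2 k integrable_on {m..M}" for k
    by (rule integrable_continuous_interval[OF phi_cont])
  have "(\<Sum>p\<in>T. case p of (k1, k2) \<Rightarrow> Fv k1 k2) \<le> (\<Sum>p\<in>S1 \<times> S2. case p of (k1, k2) \<Rightarrow> Fv k1 k2)"
    using fin TS by (intro sum_mono2) (auto simp: Fv0 split: prod.splits)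
  also have "\<dots> = (\<Sum>k1\<in>S1. \<Sum>k2\<in>S2. Fv k1 k2)"
    by (simp add: sum.cartesian_product)
  also have "\<dots> \<le> (\<Sum>k1\<in>S1. \<Sum>k2\<in>S2. integral {m..M} (Phi k1 k2))"
    by (intro sum_mono one)
  also have "\<dots> = integral {m..M} (\<lambda>x. \<Sum>k1\<in>S1. \<Sum>k2\<in>S2. Phi k1 k2 x)"
  proof -
    have "integral {m..M} (\<lambda>x. \<Sum>k1\<in>S1. \<Sum>k2\<in>S2. Phi k1 k2 x) = (\<Sum>k1\<in>S1. integral {m..M} (\<lambda>x. \<Sum>k2\<in>S2. Phi k1 k2 x))"
      using fin by (intro integral_sum integrable_sum Phi_int) auto
    also have "\<dots> = (\<Sum>k1\<in>S1. \<Sum>k2\<in>S2. integral {m..M} (Phi k1 k2))"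
      using fin by (intro sum.cong refl integral_sum Phi_int) auto
    finally show ?thesis by simp
  qed
  also have "\<dots> = integral {m..M} (\<lambda>x. (\<Sum>k1\<in>S1. phi K1 j1 k1 x) * (\<Sum>k2\<in>S2. phi K2 j2 k2 x))"
    by (simp add: Phi_def sum_product)
  also have "\<dots> \<le> integral {m..M} (\<lambda>x. A1 * (\<Sum>k2\<in>S2. phi K2 j2 k2 x))"
  proof (rule integral_le)
    show "(\<lambda>x. (\<Sum>k1\<in>S1. phi K1 j1 k1 x) * (\<Sum>k2\<in>S2. phi K2 j2 k2 x)) integrable_on {m..M}"
      by (intro integrable_continuous_interval continuous_intros phi_cont)
    show "(\<lambda>x. A1 * (\<Sum>k2\<in>S2. phi K2 j2 k2 x)) integrable_on {m..M}"
      by (intro integrable_continuous_interval continuous_intros phi_cont)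
    fix x
    show "(\<Sum>k1\<in>S1. phi K1 j1 k1 x) * (\<Sum>k2\<in>S2. phi K2 j2 k2 x) \<le> A1 * (\<Sum>k2\<in>S2. phi K2 j2 k2 x)"
      using A1b K2 by (intro mult_right_mono sum_nonneg phi_nonneg) auto
  qed
  also have "\<dots> = A1 * (\<Sum>k2\<in>S2. integral {m..M} (phi K2 j2 k2))"
    using fin phi2_int by (simp add: integral_sum)
  also have "(\<Sum>k2\<in>S2. integral {m..M} (phi K2 j2 k2)) =
     3 * K2 * Lam j2 * (\<Sum>k2\<in>S2. integral {m..M} (\<lambda>x. (1 + \<bar>2 powr real_of_int j2 * x - real_of_int k2\<bar>) powr (- (9/4))))"
    unfolding sum_distrib_left by (intro sum.cong refl) (simp add: phi_def[abs_def])
  also have "A1 * \<dots> \<le> A1 * (3 * K2 * Lam j2 * (2 powr (- real_of_int j2) * (4/5) * Z (5/4)))"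
  proof -
    have "0 \<le> (\<Sum>k1\<in>S1. phi K1 j1 k1 0)" using K1 by (intro sum_nonneg phi_nonneg) auto
    then have A10: "0 \<le> A1" using A1b[of 0] by linarith
    show ?thesis using A10 K2 Lam_nonneg IB[OF fin(2)] T(2) unfolding S2_def
      by (intro mult_left_mono) auto
  qed
  finally show ?thesis unfolding A1_def Fv_def by (simp add: mult.assoc)
qed


lemma k_lt:
  assumes "real_of_int k * 2 powr (- real_of_int j) < m"
  shows "real_of_int k \<le> 2 powr real_of_int j * m"
proof -
  have "real_of_int k = (real_of_int k * 2 powr (- real_of_int j)) * 2 powr real_of_int j"
    by (simp add: powr_minus)
  also have "\<dots> \<le> m * 2 powr real_of_int j" using assms by (intro mult_right_mono) auto
  finally show ?thesis by (simp add: mult.commute)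
qed

lemma k_gt:
  assumes "real_of_int k * 2 powr (- real_of_int j) > M"
  shows "2 powr real_of_int j * M \<le> real_of_int k"
proof -
  have "M * 2 powr real_of_int j \<le> (real_of_int k * 2 powr (- real_of_int j)) * 2 powr real_of_int j"
    using assms by (intro mult_right_mono) auto
  also have "\<dots> = real_of_int k" by (simp add: powr_minus)
  finally show ?thesis by (simp add: mult.commute)
qed

lemma c_eq: "1 / (2 powr real_of_int j * (9/4 - 1)) = 2 powr (- real_of_int j) * (4/5)"
  by (simp add: powr_minus field_simps)

lemma IB_lt:
  assumes mM: "m \<le> M" and S: "finite S2" "S2 \<subseteq> {k. real_of_int k * 2 powr (- real_of_int j) < m}"
  shows "(\<Sum>k\<in>S2. integral {m..M} (\<lambda>x. (1 + \<bar>2 powr real_of_int j * x - real_of_int k\<bar>) powr (- (9/4))))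
         \<le> 2 powr (- real_of_int j) * (4/5) * Z (5/4)"
proof -
  define c where "c = 2 powr real_of_int j * m"
  have "(\<Sum>k\<in>S2. integral {m..M} (\<lambda>x. (1 + \<bar>2 powr real_of_int j * x - real_of_int k\<bar>) powr (- (9/4))))
     \<le> (\<Sum>k\<in>S2. (1 + (c - real_of_int k)) powr (1 - 9/4) / (2 powr real_of_int j * (9/4 - 1)))"
  proof (rule sum_mono)
    fix k assume "k \<in> S2"
    then have "real_of_int k \<le> 2 powr real_of_int j * m" using S k_lt by blast
    then show "integral {m..M} (\<lambda>x. (1 + \<bar>2 powr real_of_int j * x - real_of_int k\<bar>) powr (- (9/4)))
       \<le> (1 + (c - real_of_int k)) powr (1 - 9/4) / (2 powr real_of_int j * (9/4 - 1))"
      unfolding c_def by (intro int_lt(2) mM) auto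
  qed
  also have "\<dots> = (\<Sum>k\<in>S2. (1 + (c - real_of_int k)) powr (- (5/4))) * (1 / (2 powr real_of_int j * (9/4 - 1)))"
    unfolding sum_distrib_right by (intro sum.cong refl) simp
  also have "\<dots> \<le> Z (5/4) * (1 / (2 powr real_of_int j * (9/4 - 1)))"
    using S by (intro mult_right_mono sum_le_Z) (auto simp: c_def dest: k_lt)
  also have "\<dots> = 2 powr (- real_of_int j) * (4/5) * Z (5/4)" unfolding c_eq by simp
  finally show ?thesis .
qed

lemma IB_gt:
  assumes mM: "m \<le> M" and S: "finite S2" "S2 \<subseteq> {k. real_of_int k * 2 powr (- real_of_int j) > M}"
  shows "(\<Sum>k\<in>S2. integral {m..M} (\<lambda>x. (1 + \<bar>2 powr real_of_int j * x - real_of_int k\<bar>) powr (- (9/4))))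
         \<le> 2 powr (- real_of_int j) * (4/5) * Z (5/4)"
proof -
  define c where "c = 2 powr real_of_int j * M"
  have "(\<Sum>k\<in>S2. integral {m..M} (\<lambda>x. (1 + \<bar>2 powr real_of_int j * x - real_of_int k\<bar>) powr (- (9/4))))
     \<le> (\<Sum>k\<in>S2. (1 + (real_of_int k - c)) powr (1 - 9/4) / (2 powr real_of_int j * (9/4 - 1)))"
  proof (rule sum_mono)
    fix k assume "k \<in> S2"
    then have "2 powr real_of_int j * M \<le> real_of_int k" using S k_gt by blast
    then show "integral {m..M} (\<lambda>x. (1 + \<bar>2 powr real_of_int j * x - real_of_int k\<bar>) powr (- (9/4)))
       \<le> (1 + (real_of_int k - c)) powr (1 - 9/4) / (2 powr real_of_int j * (9/4 - 1))"
      unfolding c_def by (intro int_gt(2) mM) auto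
  qed
  also have "\<dots> = (\<Sum>k\<in>S2. (1 + (real_of_int k - c)) powr (- (5/4))) * (1 / (2 powr real_of_int j * (9/4 - 1)))"
    unfolding sum_distrib_right by (intro sum.cong refl) simp
  also have "\<dots> \<le> Z (5/4) * (1 / (2 powr real_of_int j * (9/4 - 1)))"
    using S by (intro mult_right_mono sum_ge_Z) (auto simp: c_def dest: k_gt)
  also have "\<dots> = 2 powr (- real_of_int j) * (4/5) * Z (5/4)" unfolding c_eq by simp
  finally show ?thesis .
qed


lemma finite_bound_to_infsum:
  fixes F :: "'a \<Rightarrow> real"
  assumes "\<And>x. 0 \<le> F x" "\<And>T. finite T \<Longrightarrow> T \<subseteq> A \<Longrightarrow> sum F T \<le> B"
  shows "F summable_on A \<and> infsum F A \<le> B"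
proof -
  have s: "F summable_on A"
    by (rule nonneg_bdd_above_summable_on) (use assms in \<open>auto intro!: bdd_aboveI\<close>)
  moreover have "infsum F A \<le> B" by (rule infsum_le_finite_sums[OF s]) (use assms in auto)
  ultimately show ?thesis by simp
qed

theorem mainTheorem14:
  fixes \<psi> :: "real \<Rightarrow> real" and H1 H2 :: real
  assumes "meyer_wavelet \<psi>"
    and "1/2 < H1" "H1 < 1" "1/2 < H2" "H2 < 1" "H1 + H2 > 3/2"
  shows "\<exists>C>0. \<forall>t s j1 j2.
     t \<in> {0<..<1} \<and> s \<in> {0<..<1} \<and> j1 \<le> j2 \<and> 0 \<le> j2 \<longrightarrow>
     (let B = C * sqrt (ln (3 + real_of_int \<bar>j1\<bar> + 2 powr real_of_int j1))
                * sqrt (ln (3 + real_of_int \<bar>j2\<bar> + 2 powr real_of_int j2))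
                * 2 powr (- real_of_int j2);
          F = (\<lambda>(k1, k2). Lw j1 j2 k1 k2 * \<bar>Iint \<psi> H1 H2 j1 j2 k1 k2 t s\<bar>)
      in F summable_on (UNIV \<times> Zlt j2 t s) \<and> infsum F (UNIV \<times> Zlt j2 t s) \<le> B \<and>
         F summable_on (UNIV \<times> Zgt j2 t s) \<and> infsum F (UNIV \<times> Zgt j2 t s) \<le> B)"
proof -
  interpret mw \<psi> by unfold_locales (rule assms(1))
  obtain K1 where K1: "0 \<le> K1" "\<And>u. \<bar>psiH \<psi> H1 u\<bar> \<le> K1 * (1 + \<bar>u\<bar>) powr (-5/2)"
    using psiH_decay[OF assms(2,3)] by blast
  obtain K2 where K2: "0 \<le> K2" "\<And>u. \<bar>psiH \<psi> H2 u\<bar> \<le> K2 * (1 + \<bar>u\<bar>) powr (-5/2)"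
    using psiH_decay[OF assms(4,5)] by blast
  define C0 where "C0 = (3 * K1 * (2 * Z (9/4))) * (3 * K2) * ((4/5) * Z (5/4))"
  have Z0: "0 \<le> Z p" if "1 < p" for p
    unfolding Z_def using that by (intro suminf_nonneg Z_summable) auto
  have C00: "0 \<le> C0" unfolding C0_def using K1 K2 Z0[of "9/4"] Z0[of "5/4"] by simp
  define C where "C = C0 + 1"
  have C0C: "C0 \<le> C" by (simp add: C_def)
  show ?thesis
  proof (intro exI[of _ C] conjI allI impI)
    show "0 < C" using C00 by (simp add: C_def)
    fix t s :: real and j1 j2 :: int
    assume h: "t \<in> {0<..<1} \<and> s \<in> {0<..<1} \<and> j1 \<le> j2 \<and> 0 \<le> j2"
    define m where "m = min t s"
    define M where "M = max t s"
    have mM: "0 \<le> m" "m \<le> M" "M \<le> 1" using h by (auto simp: m_def M_def)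
    define B where "B = C * sqrt (ln (3 + real_of_int \<bar>j1\<bar> + 2 powr real_of_int j1))
                * sqrt (ln (3 + real_of_int \<bar>j2\<bar> + 2 powr real_of_int j2))
                * 2 powr (- real_of_int j2)"
    define F where "F = (\<lambda>(k1, k2). Lw j1 j2 k1 k2 * \<bar>Iint \<psi> H1 H2 j1 j2 k1 k2 t s\<bar>)"
    have F0: "0 \<le> F p" for p unfolding F_def by (auto simp: Lw_def split: prod.splits)
    have B_eq: "B = C * (Lam j1 * Lam j2 * 2 powr (- real_of_int j2))"
      by (simp add: B_def Lam_def)
    have LL0: "0 \<le> Lam j1 * Lam j2 * 2 powr (- real_of_int j2)" by (simp add: Lam_nonneg)
    have gen: "sum F T \<le> B"
      if T: "finite T" "snd ` T \<subseteq> KS"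
        and IB: "\<And>S2. finite S2 \<Longrightarrow> S2 \<subseteq> KS \<Longrightarrow>
       (\<Sum>k\<in>S2. integral {m..M} (\<lambda>x. (1 + \<bar>2 powr real_of_int j2 * x - real_of_int k\<bar>) powr (- (9/4))))
         \<le> 2 powr (- real_of_int j2) * (4/5) * Z (5/4)" for T KS
    proof -
      have "sum F T = (\<Sum>p\<in>T. (case p of (k1, k2) \<Rightarrow> Lw j1 j2 k1 k2 *
        \<bar>LINT x:{m..M}|lborel. psiH \<psi> H1 (2 powr real_of_int j1 * x - real_of_int k1) * psiH \<psi> H2 (2 powr real_of_int j2 * x - real_of_int k2)\<bar>))"
        by (simp add: F_def Iint_def m_def M_def)
      also have "\<dots> \<le> (3 * K1 * Lam j1 * (2 * Z (9/4))) * (3 * K2 * Lam j2) * (2 powr (- real_of_int j2) * (4/5) * Z (5/4))"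
        by (rule main_sum[OF K1 K2 mM T IB])
      also have "\<dots> = C0 * (Lam j1 * Lam j2 * 2 powr (- real_of_int j2))"
        by (simp add: C0_def algebra_simps)
      also have "\<dots> \<le> C * (Lam j1 * Lam j2 * 2 powr (- real_of_int j2))"
        by (intro mult_right_mono C0C LL0)
      finally show ?thesis by (simp add: B_eq)
    qed
    have lt: "F summable_on (UNIV \<times> Zlt j2 t s) \<and> infsum F (UNIV \<times> Zlt j2 t s) \<le> B"
    proof (rule finite_bound_to_infsum[OF F0])
      fix T :: "(int \<times> int) set" assume T: "finite T" "T \<subseteq> UNIV \<times> Zlt j2 t s"
      show "sum F T \<le> B"
      proof (rule gen[of T "Zlt j2 t s"])
        show "snd ` T \<subseteq> Zlt j2 t s" using T by auto
        fix S2 assume "finite S2" "S2 \<subseteq> Zlt j2 t s"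
        then show "(\<Sum>k\<in>S2. integral {m..M} (\<lambda>x. (1 + \<bar>2 powr real_of_int j2 * x - real_of_int k\<bar>) powr (- (9/4))))
          \<le> 2 powr (- real_of_int j2) * (4/5) * Z (5/4)"
          by (intro IB_lt mM) (auto simp: Zlt_def m_def)
      qed (use T in auto)
    qed
    have gt: "F summable_on (UNIV \<times> Zgt j2 t s) \<and> infsum F (UNIV \<times> Zgt j2 t s) \<le> B"
    proof (rule finite_bound_to_infsum[OF F0])
      fix T :: "(int \<times> int) set" assume T: "finite T" "T \<subseteq> UNIV \<times> Zgt j2 t s"
      show "sum F T \<le> B"
      proof (rule gen[of T "Zgt j2 t s"])
        show "snd ` T \<subseteq> Zgt j2 t s" using T by auto
        fix S2 assume "finite S2" "S2 \<subseteq> Zgt j2 t s"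
        then show "(\<Sum>k\<in>S2. integral {m..M} (\<lambda>x. (1 + \<bar>2 powr real_of_int j2 * x - real_of_int k\<bar>) powr (- (9/4))))
          \<le> 2 powr (- real_of_int j2) * (4/5) * Z (5/4)"
          by (intro IB_gt mM) (auto simp: Zgt_def M_def)
      qed (use T in auto)
    qed
    show "let B = C * sqrt (ln (3 + real_of_int \<bar>j1\<bar> + 2 powr real_of_int j1))
                * sqrt (ln (3 + real_of_int \<bar>j2\<bar> + 2 powr real_of_int j2))
                * 2 powr (- real_of_int j2);
          F = (\<lambda>(k1, k2). Lw j1 j2 k1 k2 * \<bar>Iint \<psi> H1 H2 j1 j2 k1 k2 t s\<bar>)
      in F summable_on (UNIV \<times> Zlt j2 t s) \<and> infsum F (UNIV \<times> Zlt j2 t s) \<le> B \<and>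
         F summable_on (UNIV \<times> Zgt j2 t s) \<and> infsum F (UNIV \<times> Zgt j2 t s) \<le> B"
      unfolding Let_def using lt gt unfolding B_def F_def by blast
  qed
qed


end
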